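(* Suppose $s=0$. Then $(p_0^*,H^U_0)$ is a robustly optimal selling strategy, i.e., uniform information is optimal and the robust price is $p_0^*$, where $p_0^*$ and $H^U_0$ are defined in the context.
   Context: Model. A buyer's match value $x\in\{0,1\}$ has $\mathbb P(x=1)=\mu\in(0,1)$. For $m\in[0,1]$, $\mathcal M(m)$ is the set of CDFs on $[0,1]$ with mean $m$. The seller chooses $(p,H)\in[0,1]\times\mathcal M(\mu)$ (price and distribution of the buyer's posterior; $H(w)=1$ for $w\ge1$). The outside option $v$ has CDF $G\in\mathcal M(\xi)$, $\xi\in(0,1)$, and the search cost is $s$; with $S_G(t)=\int_t^1(v-t)\,dG(v)$ let $a$ solve $S_G(a)=s$ (for $s=0$ take $a$ to be the supremum of the support of $G$, so $\min\{a,v\}=v$ a.s.). Revenue: $\Pi(p,H\mid G)=p\int_0^1[1-H(p+\min\{a,v\})]\,dG(v)$. A robustly optimal selling strategy maximizes $\min_{G\in\mathcal M(\xi)}\Pi(p,H\mid G)$ over $[0,1]\times\mathcal M(\mu)$. With $s=0$: $\underline\mu=\frac{2-\xi-\sqrt{2\xi-\xi^2}}{2(1-\xi)}$, $\bar\mu=1-\frac{\sqrt\xi}{2}$; $p_0^*=\frac{1-\sqrt{2\xi-\xi^2}}{1-\xi}$ if $\mu\le\underline\mu$, $p_0^*=2\mu-1$ if $\underline\mu<\mu\le\bar\mu$, $p_0^*=1-\sqrt\xi$ if $\mu>\bar\mu$. $H^U_0$ is the uniform CDF on $[2\mu-1,1]$ if $\mu>\bar\mu$, and otherwise $H^U_0(w)=1-\frac{2\mu}{1+p_0^*}$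 for $w\in[0,p_0^* )$, $H^U_0(w)=1-\frac{2\mu}{1-(p_0^* )^2}(1-w)$ for $w\in[p_0^*,1]$. *)

theory Defs
  imports "HOL-Analysis.Analysis"
begin

definition cdf01 :: "(real \<Rightarrow> real) \<Rightarrow> bool" where
  "cdf01 F \<longleftrightarrow> mono F \<and> (\<forall>x. continuous (at_right x) F)
      \<and> (\<forall>w<0. F w = 0) \<and> (\<forall>w\<ge>1. F w = 1)"

definition CDFs_mean :: "real \<Rightarrow> (real \<Rightarrow> real) set" where
  "CDFs_mean m = {F. cdf01 F \<and> (\<integral>x. x \<partial>(interval_measure F)) = m}"

text \<open>Revenue with search cost s = 0, where min(a,v) = v almost surely.\<close>
definition revenue0 :: "real \<Rightarrow> (real \<Rightarrow> real) \<Rightarrow> (real \<Rightarrow> real) \<Rightarrow> real" where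
  "revenue0 p H G = p * (\<integral>v. (1 - H (p + v)) \<partial>(interval_measure G))"

definition worst_revenue0 :: "real \<Rightarrow> real \<Rightarrow> (real \<Rightarrow> real) \<Rightarrow> real" where
  "worst_revenue0 xi p H = (INF G \<in> CDFs_mean xi. revenue0 p H G)"

definition robustly_optimal0 :: "real \<Rightarrow> real \<Rightarrow> real \<Rightarrow> (real \<Rightarrow> real) \<Rightarrow> bool" where
  "robustly_optimal0 mu xi p H \<longleftrightarrow>
     p \<in> {0..1} \<and> H \<in> CDFs_mean mu \<and>
     (\<forall>p'\<in>{0..1}. \<forall>H'\<in>CDFs_mean mu. worst_revenue0 xi p' H' \<le> worst_revenue0 xi p H)"

definition mu_low :: "real \<Rightarrow> real" where
  "mu_low xi = (2 - xi - sqrt (2*xi - xi^2)) / (2 * (1 - xi))"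

definition mu_high :: "real \<Rightarrow> real" where
  "mu_high xi = 1 - sqrt xi / 2"

definition p0_star :: "real \<Rightarrow> real \<Rightarrow> real" where
  "p0_star mu xi =
     (if mu \<le> mu_low xi then (1 - sqrt (2*xi - xi^2)) / (1 - xi)
      else if mu \<le> mu_high xi then 2*mu - 1
      else 1 - sqrt xi)"

definition HU0 :: "real \<Rightarrow> real \<Rightarrow> real \<Rightarrow> real" where
  "HU0 mu xi w =
     (if mu > mu_high xi then
        (if w < 2*mu - 1 then 0 else if w \<ge> 1 then 1
         else (w - (2*mu - 1)) / (1 - (2*mu - 1)))
      else
        (let p = p0_star mu xi in
         if w < 0 then 0
         else if w < p then 1 - 2*mu / (1 + p)
         else if w \<le> 1 then 1 - 2*mu / (1 - p^2) * (1 - w)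
         else 1))"

end

theory Submission
  imports Defs "HOL-Probability.Probability"
begin

lemma cdf01_mono: "cdf01 F \<Longrightarrow> x \<le> y \<Longrightarrow> F x \<le> F y"
  unfolding cdf01_def by (auto dest: monoD)

lemma cdf01_le1: "cdf01 F \<Longrightarrow> F x \<le> 1"
proof -
  assume c: "cdf01 F"
  show ?thesis
  proof (cases "x \<le> 1")
    case True
    then have "F x \<le> F 1" using cdf01_mono[OF c] by auto
    also have "F 1 = 1" using c unfolding cdf01_def by auto
    finally show ?thesis .
  next
    case False then show ?thesis using c unfolding cdf01_def by auto
  qed
qed

lemma cdf01_ge0: "cdf01 F \<Longrightarrow> F x \<ge> 0"
proof -
  assume c: "cdf01 F"
  show ?thesis
  proof (cases "x < 0")
    case True then show ?thesis using c unfolding cdf01_def by auto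
  next
    case False
    then have "F (-1) \<le> F x" using cdf01_mono[OF c] by auto
    moreover have "F (-1) = 0" using c unfolding cdf01_def by auto
    ultimately show ?thesis by simp
  qed
qed

lemma cdf01_lims:
  assumes "cdf01 F"
  shows "(F \<longlongrightarrow> 0) at_bot" "(F \<longlongrightarrow> 1) at_top"
proof -
  have "eventually (\<lambda>x. F x = 0) at_bot"
    unfolding eventually_at_bot_linorder using assms unfolding cdf01_def
    by (intro exI[of _ "-1"]) auto
  then show "(F \<longlongrightarrow> 0) at_bot" by (rule tendsto_eventually)
  have "eventually (\<lambda>x. F x = 1) at_top"
    unfolding eventually_at_top_linorder using assms unfolding cdf01_def
    by (intro exI[of _ "1"]) auto
  then show "(F \<longlongrightarrow> 1) at_top" by (rule tendsto_eventually)
qed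

lemma cdf01_rd:
  assumes "cdf01 F"
  shows "real_distribution (interval_measure F)" "cdf (interval_measure F) = F"
proof -
  have m: "\<And>x y. x \<le> y \<Longrightarrow> F x \<le> F y" using cdf01_mono[OF assms] .
  have r: "\<And>a. continuous (at_right a) F" using assms unfolding cdf01_def by auto
  show "real_distribution (interval_measure F)"
    by (rule real_distribution_interval_measure[OF m r cdf01_lims[OF assms]])
  show "cdf (interval_measure F) = F"
    by (rule cdf_interval_measure[OF m r cdf01_lims(1)[OF assms]])
qed

lemma im_cdf:
  assumes "real_distribution M"
  shows "interval_measure (cdf M) = M"
proof -
  interpret real_distribution M by fact
  have m: "\<And>x y. x \<le> y \<Longrightarrow> cdf M x \<le> cdf M y" by (rule cdf_nondecreasing)
  have r: "\<And>a. continuous (at_right a) (cdf M)" by (rule cdf_is_right_cont)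
  have rd: "real_distribution (interval_measure (cdf M))"
    by (rule real_distribution_interval_measure[OF m r cdf_lim_at_bot cdf_lim_at_top_prob])
  show ?thesis
    by (rule cdf_unique[OF rd assms cdf_interval_measure[OF m r cdf_lim_at_bot]])
qed

lemma cdf01_cdf:
  assumes "real_distribution M" "\<And>x. x < 0 \<Longrightarrow> cdf M x = 0" "\<And>x. x \<ge> 1 \<Longrightarrow> cdf M x = 1"
  shows "cdf01 (cdf M)"
proof -
  interpret real_distribution M by fact
  show ?thesis unfolding cdf01_def
    using cdf_nondecreasing cdf_is_right_cont assms by (auto intro: monoI)
qed

lemma cdf01_AE:
  assumes "cdf01 F"
  shows "AE x in interval_measure F. 0 \<le> x \<and> x \<le> 1"
proof -
  let ?M = "interval_measure F"
  interpret real_distribution ?M by (rule cdf01_rd[OF assms])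
  have cd: "cdf ?M = F" by (rule cdf01_rd[OF assms])
  have "(cdf ?M \<longlongrightarrow> measure ?M {..<0}) (at_left 0)" by (rule cdf_at_left)
  moreover have "(cdf ?M \<longlongrightarrow> 0) (at_left (0::real))"
  proof (rule tendsto_eventually)
    show "eventually (\<lambda>x. cdf ?M x = 0) (at_left (0::real))"
      unfolding cd eventually_at_left_field using assms unfolding cdf01_def
      by (intro exI[of _ "-1"]) auto
  qed
  ultimately have z1: "measure ?M {..<0} = 0"
    using tendsto_unique trivial_limit_at_left_real by blast
  have "measure ?M {1<..} = 1 - measure ?M {..1}"
  proof -
    have "{1<..} = space ?M - {..(1::real)}" by auto
    then show ?thesis using prob_compl[of "{..1}"] by simp
  qed
  also have "measure ?M {..1} = F 1" using cd unfolding cdf_def by metis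
  also have "F 1 = 1" using assms unfolding cdf01_def by auto
  finally have z2: "measure ?M {1<..} = 0" by simp
  have "emeasure ?M ({..<0} \<union> {1<..}) = 0"
  proof -
    have "measure ?M ({..<0} \<union> {1<..}) \<le> measure ?M {..<0} + measure ?M {1<..}"
      by (rule measure_Un_le) auto
    then have "measure ?M ({..<0} \<union> {1<..}) = 0" using z1 z2 by (simp add: measure_nonneg antisym)
    then show ?thesis by (simp add: emeasure_eq_measure)
  qed
  then show ?thesis
    by (intro AE_I[of _ _ "{..<0} \<union> {1<..}"]) auto
qed

lemma cdf01_tail:
  assumes "cdf01 F"
  shows "(\<integral>x. indicator {t<..} x \<partial>interval_measure F) = 1 - F t"
proof -
  let ?M = "interval_measure F"
  interpret real_distribution ?M by (rule cdf01_rd[OF assms])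
  have cd: "cdf ?M = F" by (rule cdf01_rd[OF assms])
  have "{t<..} = space ?M - {..t}" by auto
  then have "measure ?M {t<..} = 1 - measure ?M {..t}" using prob_compl[of "{..t}"] by simp
  also have "measure ?M {..t} = F t" using cd unfolding cdf_def by metis
  finally show ?thesis by simp
qed

lemma cdf01_int_id:
  assumes "cdf01 F"
  shows "integrable (interval_measure F) (\<lambda>x. x)"
proof -
  interpret real_distribution "interval_measure F" by (rule cdf01_rd[OF assms])
  show ?thesis
    apply (rule integrable_const_bound[of _ 1])
    using cdf01_AE[OF assms] apply (rule AE_mp) apply auto
    done
qed

definition dpmf :: "nat \<Rightarrow> (nat \<Rightarrow> real) \<Rightarrow> nat pmf" where
  "dpmf N m = embed_pmf (\<lambda>i. if i < N then m i else 0)"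

definition dmeas :: "nat \<Rightarrow> (nat \<Rightarrow> real) \<Rightarrow> (nat \<Rightarrow> real) \<Rightarrow> real measure" where
  "dmeas N m v = distr (measure_pmf (dpmf N m)) borel v"

definition dG :: "nat \<Rightarrow> (nat \<Rightarrow> real) \<Rightarrow> (nat \<Rightarrow> real) \<Rightarrow> real \<Rightarrow> real" where
  "dG N m v = cdf (dmeas N m v)"

lemma dpmf_pmf:
  assumes "\<And>i. i < N \<Longrightarrow> 0 \<le> m i" "(\<Sum>i<N. m i) = 1"
  shows "pmf (dpmf N m) i = (if i < N then m i else 0)"
proof -
  let ?f = "\<lambda>i. if i < N then m i else 0"
  have nn: "\<And>x. 0 \<le> ?f x" using assms by auto
  have "(\<integral>\<^sup>+x. ennreal (?f x) \<partial>count_space UNIV) = (\<Sum>x<N. ennreal (?f x))"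
    by (rule nn_integral_count_space') auto
  also have "\<dots> = ennreal (\<Sum>x<N. ?f x)"
    using assms(1) by (subst sum_ennreal) auto
  also have "(\<Sum>x<N. ?f x) = 1" using assms by simp
  finally have "(\<integral>\<^sup>+x. ennreal (?f x) \<partial>count_space UNIV) = 1" by simp
  then show ?thesis unfolding dpmf_def by (subst pmf_embed_pmf[OF nn]) auto
qed

lemma dmeas_int:
  assumes "\<And>i. i < N \<Longrightarrow> 0 \<le> m i" "(\<Sum>i<N. m i) = 1"
    and f: "f \<in> borel_measurable borel"
  shows "integral\<^sup>L (dmeas N m v) f = (\<Sum>i<N. m i * f (v i))"
proof -
  have "integral\<^sup>L (dmeas N m v) f = (\<integral>x. f (v x) \<partial>measure_pmf (dpmf N m))"
    unfolding dmeas_def by (rule integral_distr) (auto simp: f)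
  also have "\<dots> = (\<Sum>a<N. f (v a) * pmf (dpmf N m) a)"
    by (rule integral_measure_pmf_real) (auto simp: dpmf_pmf[OF assms(1,2)] set_pmf_eq split: if_splits)
  also have "\<dots> = (\<Sum>i<N. m i * f (v i))"
    by (rule sum.cong) (auto simp: dpmf_pmf[OF assms(1,2)])
  finally show ?thesis .
qed

lemma dmeas_rd: "real_distribution (dmeas N m v)"
  unfolding dmeas_def by (rule prob_space.real_distribution_distr[OF prob_space_measure_pmf]) auto

lemma dG_val:
  assumes "\<And>i. i < N \<Longrightarrow> 0 \<le> m i" "(\<Sum>i<N. m i) = 1"
  shows "dG N m v x = (\<Sum>i<N. m i * indicator {..x} (v i))"
proof -
  interpret real_distribution "dmeas N m v" by (rule dmeas_rd)
  have "dG N m v x = integral\<^sup>L (dmeas N m v) (indicator {..x})"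
    unfolding dG_def cdf_def by simp
  also have "\<dots> = (\<Sum>i<N. m i * indicator {..x} (v i))"
    by (rule dmeas_int[OF assms]) auto
  finally show ?thesis .
qed

lemma dG_cdf01:
  assumes "\<And>i. i < N \<Longrightarrow> 0 \<le> m i" "(\<Sum>i<N. m i) = 1"
    and "\<And>i. i < N \<Longrightarrow> 0 \<le> v i \<and> v i \<le> 1"
  shows "cdf01 (dG N m v)"
  unfolding dG_def
proof (rule cdf01_cdf[OF dmeas_rd])
  fix x :: real assume "x < 0"
  then have "\<forall>i<N. \<not> v i \<le> x" using assms(3) by force
  then show "cdf (dmeas N m v) x = 0"
    using dG_val[OF assms(1,2), of v x] unfolding dG_def
    by (auto intro!: sum.neutral simp: indicator_def)
next
  fix x :: real assume "x \<ge> 1"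
  then have "\<forall>i<N. v i \<le> x" using assms(3) by force
  then have "(\<Sum>i<N. m i * indicator {..x} (v i)) = (\<Sum>i<N. m i)"
    by (intro sum.cong) (auto simp: indicator_def)
  then show "cdf (dmeas N m v) x = 1"
    using dG_val[OF assms(1,2), of v x] assms(2) unfolding dG_def by simp
qed

lemma dG_int:
  assumes "\<And>i. i < N \<Longrightarrow> 0 \<le> m i" "(\<Sum>i<N. m i) = 1"
    and f: "f \<in> borel_measurable borel"
  shows "integral\<^sup>L (interval_measure (dG N m v)) f = (\<Sum>i<N. m i * f (v i))"
  unfolding dG_def im_cdf[OF dmeas_rd] by (rule dmeas_int[OF assms])

lemma cdf01_meas_shift:
  assumes "cdf01 H"
  shows "(\<lambda>v. 1 - H (p + v)) \<in> borel_measurable borel"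
proof -
  have "mono (\<lambda>v. H (p + v))" using cdf01_mono[OF assms] by (auto intro!: monoI)
  then have "(\<lambda>v. H (p + v)) \<in> borel_measurable borel" by (rule borel_measurable_mono)
  then show ?thesis by measurable
qed

lemma rev_disc:
  assumes H: "cdf01 H" "(\<integral>x. x \<partial>interval_measure H) = mu"
    and w: "\<And>i. i < N \<Longrightarrow> 0 \<le> m i" "(\<Sum>i<N. m i) = 1"
    and pw: "\<And>w. 0 \<le> w \<Longrightarrow> w \<le> 1 \<Longrightarrow> (\<Sum>i<N. m i * indicator {p + a i<..} w) \<le> b * w + e"
  shows "(\<integral>v. (1 - H (p + v)) \<partial>interval_measure (dG N m a)) \<le> b * mu + e"
proof -
  let ?M = "interval_measure H"
  interpret real_distribution ?M by (rule cdf01_rd[OF H(1)])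
  have ii: "\<And>t. integrable ?M (indicator {t<..} :: real \<Rightarrow> real)"
    by (rule integrable_real_indicator) (auto simp: emeasure_eq_measure)
  have "(\<integral>v. (1 - H (p + v)) \<partial>interval_measure (dG N m a)) = (\<Sum>i<N. m i * (1 - H (p + a i)))"
    by (rule dG_int[OF w cdf01_meas_shift[OF H(1)]])
  also have "\<dots> = (\<Sum>i<N. m i * (\<integral>x. indicator {p + a i<..} x \<partial>?M))"
    using cdf01_tail[OF H(1)] by simp
  also have "\<dots> = (\<integral>x. (\<Sum>i<N. m i * indicator {p + a i<..} x) \<partial>?M)"
  proof -
    have "(\<integral>x. (\<Sum>i<N. m i * indicator {p + a i<..} x) \<partial>?M)
       = (\<Sum>i<N. (\<integral>x. m i * indicator {p + a i<..} x \<partial>?M))"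
      by (rule Bochner_Integration.integral_sum) (auto intro!: integrable_mult_right ii)
    then show ?thesis by simp
  qed
  also have "\<dots> \<le> (\<integral>x. b * x + e \<partial>?M)"
  proof (rule integral_mono_AE)
    show "integrable ?M (\<lambda>x. \<Sum>i<N. m i * indicator {p + a i<..} x)"
      by (intro Bochner_Integration.integrable_sum integrable_mult_right ii)
    show "integrable ?M (\<lambda>x. b * x + e)"
      using cdf01_int_id[OF H(1)] by auto
    show "AE x in ?M. (\<Sum>i<N. m i * indicator {p + a i<..} x) \<le> b * x + e"
      using cdf01_AE[OF H(1)] by (rule AE_mp) (intro AE_I2 impI pw; blast)
  qed
  also have "\<dots> = b * mu + e"
    using cdf01_int_id[OF H(1)] H(2) prob_space by (simp)
  finally show ?thesis .
qed

lemma disc_in: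
  assumes "\<And>i. i < N \<Longrightarrow> 0 \<le> m i" "(\<Sum>i<N. m i) = 1"
    and "\<And>i. i < N \<Longrightarrow> 0 \<le> a i \<and> a i \<le> 1"
    and "(\<Sum>i<N. m i * a i) = xi"
  shows "dG N m a \<in> CDFs_mean xi"
  unfolding CDFs_mean_def using dG_cdf01[OF assms(1-3)] dG_int[OF assms(1,2), of "\<lambda>x. x" a] assms(4)
  by auto

lemma rev_nonneg:
  assumes "cdf01 H" "0 \<le> p"
  shows "0 \<le> revenue0 p H G"
  unfolding revenue0_def using assms cdf01_le1[OF assms(1)]
  by (intro mult_nonneg_nonneg integral_nonneg) auto

lemma worst_le:
  assumes "cdf01 H" "0 \<le> p" "G \<in> CDFs_mean xi"
  shows "worst_revenue0 xi p H \<le> revenue0 p H G"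
  unfolding worst_revenue0_def
  by (rule cINF_lower[OF _ assms(3)]) (auto intro!: bdd_belowI[of _ 0] rev_nonneg assms)

lemma point_in:
  assumes "0 \<le> xi" "xi \<le> 1"
  shows "dG 1 (\<lambda>_. 1) (\<lambda>_. xi) \<in> CDFs_mean xi"
  by (rule disc_in) (use assms in auto)

lemma UB0:
  assumes H: "H \<in> CDFs_mean mu" and p: "0 \<le> p" and x: "0 \<le> xi" "xi \<le> 1" "1 \<le> p + xi"
  shows "worst_revenue0 xi p H \<le> 0"
proof -
  have c: "cdf01 H" using H unfolding CDFs_mean_def by auto
  have "worst_revenue0 xi p H \<le> revenue0 p H (dG 1 (\<lambda>_. 1) (\<lambda>_. xi))"
    by (rule worst_le[OF c p point_in[OF x(1,2)]])
  also have "revenue0 p H (dG 1 (\<lambda>_. 1) (\<lambda>_. xi)) = p * (1 - H (p + xi))"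
    unfolding revenue0_def by (subst dG_int) (auto intro: cdf01_meas_shift[OF c])
  also have "H (p + xi) = 1" using c x unfolding cdf01_def by auto
  finally show ?thesis by simp
qed

lemma sum2: "(\<Sum>i<(2::nat). f i) = f 0 + f 1"
  by (simp add: numeral_2_eq_2)

lemma UBA:
  assumes H: "H \<in> CDFs_mean mu" and p: "0 \<le> p" "p < 1" and x: "0 \<le> xi" "p + xi \<le> 1"
  shows "worst_revenue0 xi p H \<le> p * (1 - xi / (1 - p))"
proof -
  have c: "cdf01 H" using H unfolding CDFs_mean_def by auto
  define l where "l = xi / (1 - p)"
  have l: "0 \<le> l" "l \<le> 1" "l * (1 - p) = xi" using p x unfolding l_def by (auto simp: field_simps)
  let ?m = "\<lambda>i::nat. if i = 0 then 1 - l else l"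
  let ?a = "\<lambda>i::nat. if i = 0 then 0 else 1 - p"
  have w: "\<And>i. i < 2 \<Longrightarrow> 0 \<le> ?m i" "(\<Sum>i<2. ?m i) = 1" using l by (auto simp: sum2)
  have G: "dG 2 ?m ?a \<in> CDFs_mean xi"
    by (rule disc_in[OF w]) (use l p in \<open>auto simp: sum2\<close>)
  have "worst_revenue0 xi p H \<le> revenue0 p H (dG 2 ?m ?a)"
    by (rule worst_le[OF c p(1) G])
  also have "revenue0 p H (dG 2 ?m ?a) = p * ((1 - l) * (1 - H p) + l * (1 - H 1))"
    unfolding revenue0_def apply (subst dG_int[OF w cdf01_meas_shift[OF c]])
     apply simp
    apply (subst sum2)
    apply simp
    done
  also have "H 1 = 1" using c unfolding cdf01_def by auto
  also have "p * ((1 - l) * (1 - H p) + l * (1 - 1)) \<le> p * (1 - l)"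
    using p l cdf01_ge0[OF c, of p] by simp (intro mult_left_mono mult_left_le; simp)
  finally show ?thesis unfolding l_def .
qed

lemma half_sum: "(\<Sum>i<n. (real i + 1/2)) = real n ^ 2 / 2"
  by (induction n) (auto simp: field_simps power2_eq_square)

lemma count_bound:
  fixes y h :: real
  assumes "0 < h" "0 \<le> y"
  shows "real (card {i\<in>{..<n}. (real i + 1/2) * h < y}) \<le> y / h + 1"
proof -
  have sub: "{i\<in>{..<n}. (real i + 1/2) * h < y} \<subseteq> {..<nat \<lceil>y / h\<rceil>}"
  proof
    fix i assume "i \<in> {i\<in>{..<n}. (real i + 1/2) * h < y}"
    then have "(real i + 1/2) * h < y" by auto
    then have "real i * h < y" using assms by (simp add: algebra_simps) 
    then have "real i < y / h" using assms by (simp add: field_simps)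
    then have "real i < \<lceil>y / h\<rceil>" by (meson le_of_int_ceiling less_le_trans)
    then have "int i < \<lceil>y / h\<rceil>" by (metis of_int_less_iff of_int_of_nat_eq)
    then show "i \<in> {..<nat \<lceil>y / h\<rceil>}" by (simp add: zless_nat_eq_int_zless)
  qed
  have "card {i\<in>{..<n}. (real i + 1/2) * h < y} \<le> nat \<lceil>y / h\<rceil>"
    using card_mono[OF _ sub] by simp
  then have "real (card {i\<in>{..<n}. (real i + 1/2) * h < y}) \<le> real (nat \<lceil>y / h\<rceil>)"
    by linarith
  also have "\<dots> \<le> y / h + 1"
    using assms ceiling_correct[of "y/h"] by (simp add: of_nat_nat)
  finally show ?thesis .
qed

lemma sum_ind_card:
  fixes c :: real
  assumes "finite A"
  shows "(\<Sum>i\<in>A. c * indicator {t i<..} w) = c * real (card {i\<in>A. t i < w})"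
proof -
  have "(\<Sum>i\<in>A. c * indicator {t i<..} w) = (\<Sum>i\<in>A. if t i < w then c else 0)"
    by (rule sum.cong) (auto simp: indicator_def)
  also have "\<dots> = (\<Sum>i\<in>{i\<in>A. t i < w}. c)"
    using assms by (rule sum.inter_filter[symmetric])
  finally show ?thesis by simp
qed

lemma le_of_eps:
  fixes X a c :: real
  assumes "c \<ge> 0" "\<And>n::nat. n \<ge> 1 \<Longrightarrow> X \<le> a + c / real n"
  shows "X \<le> a"
proof (rule ccontr)
  assume "\<not> X \<le> a"
  then have d: "X - a > 0" by simp
  obtain n :: nat where n: "c / (X - a) < real n" using reals_Archimedean2 by blast
  then have n1: "n \<ge> 1" using assms(1) d
    by (metis divide_nonneg_pos less_one not_le of_nat_0 order.strict_trans2 order.asym)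
  have "c < (X - a) * real n" using n d by (simp add: field_simps)
  then have "c / real n < X - a" using n1 by (simp add: field_simps)
  then show False using assms(2)[OF n1] by simp
qed

lemma UBD:
  assumes H: "H \<in> CDFs_mean mu" and p: "0 \<le> p" and L: "0 < L" "p + L \<le> 1"
    and b: "0 \<le> b" "b * (p + L) \<le> 1" "b * (p + L) = 1 \<or> p + L = 1"
    and mean: "b * L^2 / 2 + (1 - b * (p + L)) * L = xi"
  shows "worst_revenue0 xi p H \<le> p * b * mu"
proof -
  have c: "cdf01 H" and Hm: "(\<integral>x. x \<partial>interval_measure H) = mu"
    using H unfolding CDFs_mean_def by auto
  define r where "r = 1 - b * (p + L)"
  have r: "0 \<le> r" "r = 0 \<or> p + L = 1" using b unfolding r_def by auto
  have key: "worst_revenue0 xi p H \<le> p * b * mu + (p * b * L) / real n" if n: "n \<ge> 1" for n :: nat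
  proof -
    define m where "m = (\<lambda>i::nat. if i < n then b * L / n else if i = n then b * p else r)"
    define a where "a = (\<lambda>i::nat. if i < n then (real i + 1/2) * (L / n) else if i = n then 0 else L)"
    have nr: "real n \<ge> 1" using n by simp
    have w1: "\<And>i. i < Suc (Suc n) \<Longrightarrow> 0 \<le> m i"
      unfolding m_def using b L p r nr by auto
    have sm: "(\<Sum>i<n. m i) = b * L"
    proof -
      have "(\<Sum>i<n. m i) = (\<Sum>i<n. b * L / n)" by (rule sum.cong) (auto simp: m_def)
      then show ?thesis using nr by simp
    qed
    have w2: "(\<Sum>i<Suc (Suc n). m i) = 1"
    proof -
      have "(\<Sum>i<Suc (Suc n). m i) = (\<Sum>i<n. m i) + m n + m (Suc n)" by simp
      also have "\<dots> = b * L + b * p + r" using sm by (simp add: m_def)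
      finally show ?thesis by (simp add: r_def algebra_simps)
    qed
    have at: "\<And>i. i < Suc (Suc n) \<Longrightarrow> 0 \<le> a i \<and> a i \<le> 1"
    proof -
      fix i assume "i < Suc (Suc n)"
      show "0 \<le> a i \<and> a i \<le> 1"
      proof (cases "i < n")
        case True
        then have "real i + 1/2 \<le> real n" by linarith
        then have "(real i + 1/2) * (L / n) \<le> real n * (L / n)"
          using L by (intro mult_right_mono) auto
        also have "\<dots> = L" using nr by simp
        finally have "a i \<le> L" using True unfolding a_def by simp
        moreover have "0 \<le> a i" using True L unfolding a_def by simp
        ultimately show ?thesis using L p by linarith
      next
        case False then show ?thesis using L p unfolding a_def by auto
      qed
    qed
    have sma: "(\<Sum>i<n. m i * a i) = b * L^2 / 2"
    proof -
      have "(\<Sum>i<n. m i * a i) = (\<Sum>i<n. (b * L^2 / real n ^ 2) * (real i + 1/2))"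
        by (rule sum.cong) (auto simp: m_def a_def power2_eq_square)
      also have "\<dots> = (b * L^2 / real n ^ 2) * (real n ^ 2 / 2)"
        by (subst sum_distrib_left[symmetric]) (simp only: half_sum)
      also have "\<dots> = b * L^2 / 2" using nr by simp
      finally show ?thesis .
    qed
    have w3: "(\<Sum>i<Suc (Suc n). m i * a i) = xi"
    proof -
      have "(\<Sum>i<Suc (Suc n). m i * a i) = (\<Sum>i<n. m i * a i) + m n * a n + m (Suc n) * a (Suc n)" by simp
      also have "\<dots> = b * L^2 / 2 + r * L" using sma by (simp add: m_def a_def)
      finally show ?thesis using mean by (simp add: r_def)
    qed
    have G: "dG (Suc (Suc n)) m a \<in> CDFs_mean xi" by (rule disc_in[OF w1 w2 at w3])
    have pw: "(\<Sum>i<Suc (Suc n). m i * indicator {p + a i<..} w) \<le> b * w + b * L / real n"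
      if w: "0 \<le> w" "w \<le> 1" for w
    proof -
      have rt: "r * indicator {p + L<..} w = 0" using r w by (auto simp: indicator_def)
      have S: "(\<Sum>i<n. m i * indicator {p + a i<..} w) = (\<Sum>i<n. (b * L / n) * indicator {p + (real i + 1/2) * (L / n)<..} w)"
        by (rule sum.cong) (auto simp: m_def a_def)
      have e: "(\<Sum>i<Suc (Suc n). m i * indicator {p + a i<..} w)
          = (\<Sum>i<n. (b * L / n) * indicator {p + (real i + 1/2) * (L / n)<..} w) + b * p * indicator {p<..} w"
        using rt S by (simp add: m_def a_def)
      show ?thesis
      proof (cases "w \<le> p")
        case True
        have "\<And>i. 0 \<le> (real i + 1/2) * (L / n)" using L nr by simp
        then have "\<And>i. \<not> p + (real i + 1/2) * (L / n) < w" using True by (metis add_increasing2 not_le)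
        then have "(\<Sum>i<n. (b * L / n) * indicator {p + (real i + 1/2) * (L / n)<..} w) = 0"
          by (intro sum.neutral) (simp add: indicator_def)
        then show ?thesis using e True b L w nr by (simp add: indicator_def)
      next
        case False
        have "(\<Sum>i<n. (b * L / n) * indicator {p + (real i + 1/2) * (L / n)<..} w)
            = (b * L / n) * real (card {i\<in>{..<n}. p + (real i + 1/2) * (L / n) < w})"
          by (rule sum_ind_card) auto
        also have "{i\<in>{..<n}. p + (real i + 1/2) * (L / n) < w} = {i\<in>{..<n}. (real i + 1/2) * (L / n) < w - p}"
          by auto
        also have "(b * L / n) * real (card \<dots>) \<le> (b * L / n) * ((w - p) / (L / n) + 1)"
          using False L nr b by (intro mult_left_mono count_bound) auto
        also have "\<dots> = b * (w - p) + b * L / n" using L nr by (simp add: field_simps)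
        finally show ?thesis using e False by (simp add: indicator_def algebra_simps)
      qed
    qed
    have "worst_revenue0 xi p H \<le> revenue0 p H (dG (Suc (Suc n)) m a)"
      by (rule worst_le[OF c p G])
    also have "\<dots> \<le> p * (b * mu + b * L / real n)"
      unfolding revenue0_def
      by (rule mult_left_mono[OF rev_disc[OF c Hm w1 w2 pw] p])
    also have "\<dots> = p * b * mu + (p * b * L) / real n" by (simp add: algebra_simps)
    finally show ?thesis .
  qed
  show ?thesis
    by (rule le_of_eps[of "p * b * L"]) (use p b L key in auto)
qed

definition U01 :: "real measure" where
  "U01 = density lborel (\<lambda>x. ennreal (indicator {0..1} x))"

lemma U01_meas:
  assumes "A \<in> sets borel"
  shows "emeasure U01 A = emeasure lborel (A \<inter> {0..1})"
proof -
  have "emeasure U01 A = (\<integral>\<^sup>+ x. ennreal (indicator {0..1} x) * indicator A x \<partial>lborel)"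
    unfolding U01_def by (rule emeasure_density) (use assms in auto)
  also have "\<dots> = (\<integral>\<^sup>+ x. indicator (A \<inter> {0..1}) x \<partial>lborel)"
    by (rule nn_integral_cong) (auto simp: indicator_def)
  also have "\<dots> = emeasure lborel (A \<inter> {0..1})"
    using assms by (intro nn_integral_indicator) auto
  finally show ?thesis .
qed

lemma U01_prob: "prob_space U01"
proof
  have "emeasure U01 UNIV = emeasure lborel ({0..1::real})"
    using U01_meas[of UNIV] by simp
  then show "emeasure U01 (space U01) = 1" by (simp add: U01_def)
qed

lemma U01_measure:
  assumes "A \<in> sets borel"
  shows "measure U01 A = measure lborel (A \<inter> {0..1})"
  using U01_meas[OF assms] by (simp add: measure_def)

definition Tq :: "real \<Rightarrow> real \<Rightarrow> real \<Rightarrow> real" where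
  "Tq a0 c u = (if u < a0 then 0 else c + (u - a0) * (1 - c) / (1 - a0))"

definition QM :: "real \<Rightarrow> real \<Rightarrow> real measure" where
  "QM a0 c = distr U01 borel (Tq a0 c)"

definition Fq :: "real \<Rightarrow> real \<Rightarrow> real \<Rightarrow> real" where
  "Fq a0 c x = (if x < 0 then 0 else if x < c then a0 else if x < 1 then a0 + (1 - a0) * (x - c) / (1 - c) else 1)"

lemma Tq_mono:
  assumes "0 \<le> a0" "a0 < 1" "0 \<le> c" "c \<le> 1"
  shows "mono (Tq a0 c)"
proof (rule monoI)
  fix u u' :: real assume "u \<le> u'"
  have k: "0 \<le> (1 - c) / (1 - a0)" using assms by auto
  show "Tq a0 c u \<le> Tq a0 c u'"
  proof (cases "u < a0")
    case True
    then show ?thesis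
    proof (cases "u' < a0")
      case False
      then have "0 \<le> (u' - a0) * (1 - c) / (1 - a0)" using assms by auto
      then show ?thesis using True False assms unfolding Tq_def by auto
    qed (auto simp: Tq_def)
  next
    case False
    then have "(u - a0) * (1 - c) / (1 - a0) \<le> (u' - a0) * (1 - c) / (1 - a0)"
      using \<open>u \<le> u'\<close> assms by (intro divide_right_mono mult_right_mono) auto
    then show ?thesis using False \<open>u \<le> u'\<close> unfolding Tq_def by auto
  qed
qed

lemma QM_rd:
  assumes "0 \<le> a0" "a0 < 1" "0 \<le> c" "c \<le> 1"
  shows "real_distribution (QM a0 c)"
  unfolding QM_def
  by (rule prob_space.real_distribution_distr[OF U01_prob])
     (use borel_measurable_mono[OF Tq_mono[OF assms]] in \<open>auto simp: U01_def\<close>)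

lemma QM_cdf:
  assumes "0 \<le> a0" "a0 < 1" "0 \<le> c" "c < 1"
  shows "cdf (QM a0 c) x = Fq a0 c x"
proof -
  have Tm: "Tq a0 c \<in> borel_measurable borel"
    using borel_measurable_mono[OF Tq_mono] assms by auto
  have "Tq a0 c -` {..x} \<inter> space borel \<in> sets borel" by (rule measurable_sets[OF Tm]) auto
  then have s: "Tq a0 c -` {..x} \<in> sets borel" by simp
  have "cdf (QM a0 c) x = measure U01 (Tq a0 c -` {..x} \<inter> space U01)"
    unfolding cdf_def QM_def by (rule measure_distr) (use Tm in \<open>auto simp: U01_def\<close>)
  also have "\<dots> = measure lborel ({u. Tq a0 c u \<le> x} \<inter> {0..1})"
    using U01_measure[OF s] by (simp add: U01_def vimage_def)
  also have "\<dots> = Fq a0 c x"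
  proof -
    define k where "k = (1 - c) / (1 - a0)"
    have k: "k > 0" using assms unfolding k_def by auto
    have T: "\<And>u. Tq a0 c u = (if u < a0 then 0 else c + (u - a0) * k)"
      unfolding Tq_def k_def by auto
    consider "x < 0" | "0 \<le> x" "x < c" | "c \<le> x" "x < 1" | "1 \<le> x" by linarith
    then show ?thesis
    proof cases
      case 1
      have "{u. Tq a0 c u \<le> x} \<inter> {0..1} = {}"
      proof -
        have "\<And>u. u \<ge> a0 \<Longrightarrow> 0 \<le> c + (u - a0) * k" using assms k by auto
        then show ?thesis using 1 unfolding T by (auto simp: not_less) (smt (verit))
      qed
      then show ?thesis using 1 by (simp add: Fq_def)
    next
      case 2
      have "{u. Tq a0 c u \<le> x} \<inter> {0..1} = {0..<a0}"
      proof -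
        have "\<And>u. u \<ge> a0 \<Longrightarrow> c \<le> c + (u - a0) * k" using assms k by auto
        then show ?thesis using 2 assms unfolding T
          by (intro set_eqI, case_tac "xa < a0") (auto simp: not_less, smt (verit))
      qed
      then show ?thesis using 2 assms by (simp add: Fq_def measure_def)
    next
      case 3
      define e where "e = a0 + (x - c) / k"
      have h1: "0 \<le> (x - c) * (1 - a0)" "0 \<le> (1 - x) * (1 - a0)" using 3 assms by auto
      have e: "a0 \<le> e" "e \<le> 1" using 3 k assms h1 unfolding e_def k_def by (auto simp: field_simps algebra_simps)
      have "{u. Tq a0 c u \<le> x} \<inter> {0..1} = {0..e}"
      proof -
        have "\<And>u. u \<ge> a0 \<Longrightarrow> (c + (u - a0) * k \<le> x) = (u \<le> e)"
          using k unfolding e_def by (auto simp: field_simps)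
        then show ?thesis using 3 assms e unfolding T
          by (intro set_eqI, case_tac "xa < a0") (auto simp: not_less)
      qed
      moreover have "e = a0 + (1 - a0) * (x - c) / (1 - c)"
        unfolding e_def k_def using assms by (simp add: field_simps)
      ultimately show ?thesis using 3 assms e by (simp add: Fq_def)
    next
      case 4
      have "{u. Tq a0 c u \<le> x} \<inter> {0..1} = {0..1}"
      proof -
        have "\<And>u. a0 \<le> u \<Longrightarrow> u \<le> 1 \<Longrightarrow> c + (u - a0) * k \<le> 1"
        proof -
          fix u assume "a0 \<le> u" "u \<le> 1"
          then have "(u - a0) * k \<le> (1 - a0) * k" using k by (intro mult_right_mono) auto
          also have "\<dots> = 1 - c" unfolding k_def using assms by simp
          finally show "c + (u - a0) * k \<le> 1" by simp
        qed
        then show ?thesis using 4 assms unfolding T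
          by (intro set_eqI, case_tac "xa < a0") (auto simp: not_less, smt (verit))
      qed
      then show ?thesis using 4 assms by (simp add: Fq_def)
    qed
  qed
  finally show ?thesis .
qed

lemma QM_mean:
  assumes "0 \<le> a0" "a0 < 1" "0 \<le> c" "c < 1"
  shows "(\<integral>x. x \<partial>QM a0 c) = (1 - a0) * (1 + c) / 2"
proof -
  have Tm: "Tq a0 c \<in> borel_measurable borel"
    using borel_measurable_mono[OF Tq_mono] assms by auto
  define k where "k = (1 - c) / (1 - a0)"
  have "(\<integral>x. x \<partial>QM a0 c) = (\<integral>u. Tq a0 c u \<partial>U01)"
    unfolding QM_def by (rule integral_distr) (use Tm in \<open>auto simp: U01_def\<close>)
  also have "\<dots> = (\<integral>u. indicator {0..1} u *\<^sub>R Tq a0 c u \<partial>lborel)"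
    unfolding U01_def by (rule integral_density) (use Tm in auto)
  also have "\<dots> = (\<integral>u. indicator {a0..1} u *\<^sub>R (c + (u - a0) * k) \<partial>lborel)"
    by (rule Bochner_Integration.integral_cong) (use assms in \<open>auto simp: indicator_def Tq_def k_def\<close>)
  also have "\<dots> = (c * 1 + k * (1 - a0)^2 / 2) - (c * a0 + k * (a0 - a0)^2 / 2)"
  proof (rule integral_FTC_atLeastAtMost)
    show "a0 \<le> 1" using assms by simp
    show "continuous_on {a0..1} (\<lambda>u. c + (u - a0) * k)" by (intro continuous_intros)
    fix x assume "a0 \<le> x" "x \<le> 1"
    show "((\<lambda>u. c * u + k * (u - a0)^2 / 2) has_vector_derivative c + (x - a0) * k) (at x within {a0..1})"
      by (auto intro!: derivative_eq_intros simp: has_real_derivative_iff_has_vector_derivative[symmetric] field_simps)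
  qed
  also have "\<dots> = (1 - a0) * (1 + c) / 2"
    unfolding k_def using assms by (simp add: field_simps power2_eq_square)
  finally show ?thesis .
qed

lemma Fq_in:
  assumes "0 \<le> a0" "a0 < 1" "0 \<le> c" "c < 1" "(1 - a0) * (1 + c) / 2 = mu"
  shows "Fq a0 c \<in> CDFs_mean mu"
proof -
  have rd: "real_distribution (QM a0 c)" using QM_rd assms by auto
  have cd: "cdf (QM a0 c) = Fq a0 c" using QM_cdf[OF assms(1-4)] by auto
  have "cdf01 (cdf (QM a0 c))"
    by (rule cdf01_cdf[OF rd]) (use assms in \<open>auto simp: cd Fq_def\<close>)
  moreover have "interval_measure (Fq a0 c) = QM a0 c" using im_cdf[OF rd] cd by simp
  ultimately show ?thesis unfolding CDFs_mean_def using cd QM_mean[OF assms(1-4)] assms(5) by auto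
qed

lemma t2lt: "0 \<le> t \<Longrightarrow> t < 1 \<Longrightarrow> t^2 < (1::real)"
  by (simp add: power2_eq_square) (metis le_less_trans mult_left_le less_imp_le)

definition ff :: "real \<Rightarrow> real \<Rightarrow> real" where "ff xi t = 2*t*(1-t-xi)/(1-t^2)"

lemma s_facts:
  fixes xi :: real
  assumes "0 < xi" "xi < 1"
  defines "s \<equiv> sqrt (2*xi - xi^2)"
  shows "s^2 = 2*xi - xi^2" "0 < s" "s < 1" "xi < s"
proof -
  have xx: "xi^2 < xi" using mult_strict_left_mono[OF assms(2,1)] by (simp add: power2_eq_square)
  have p: "0 < 2*xi - xi^2" using assms xx by simp
  show s2: "s^2 = 2*xi - xi^2" unfolding s_def using p by simp
  show "0 < s" unfolding s_def using p by simp
  have "0 < (1-xi)^2" using assms by simp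
  moreover have "(1-xi)^2 = 1 - 2*xi + xi^2" by (simp add: power2_diff)
  ultimately have "2*xi - xi^2 < 1" by linarith
  then show "s < 1" unfolding s_def using real_sqrt_less_mono[of "2*xi - xi^2" 1] by simp
  have "xi^2 < 2*xi - xi^2" using xx by linarith
  then show "xi < s" unfolding s_def using assms by (simp add: real_less_rsqrt)
qed

lemma ff_alt:
  fixes xi s t :: real
  assumes s2: "s^2 = 2*xi - xi^2" and s: "0 < s" and t: "0 \<le> t" "t < 1"
  shows "ff xi t = (1 - s) - ((1+s)*t - (1-xi))^2 / ((1+s)*(1-t^2))"
proof -
  have d: "1 - t^2 > 0" using t2lt[OF t] by simp
  have e: "(1+s)*((1-s)*(1-t^2) - 2*t*(1-t-xi)) = ((1+s)*t - (1-xi))^2"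
    using s2 by algebra
  have "((1+s)*t - (1-xi))^2 / ((1+s)*(1-t^2)) = ((1+s)*((1-s)*(1-t^2) - 2*t*(1-t-xi))) / ((1+s)*(1-t^2))"
    by (subst e[symmetric]) (rule refl)
  also have "\<dots> = ((1-s)*(1-t^2) - 2*t*(1-t-xi)) / (1-t^2)"
    using s by (intro mult_divide_mult_cancel_left) auto
  also have "\<dots> = (1-s)*(1-t^2)/(1-t^2) - 2*t*(1-t-xi) / (1-t^2)"
    by (rule diff_divide_distrib)
  also have "\<dots> = (1-s) - ff xi t" unfolding ff_def using d by simp
  finally show ?thesis by simp
qed

lemma ff_le:
  fixes xi s t :: real
  assumes s2: "s^2 = 2*xi - xi^2" and s: "0 < s" and t: "0 \<le> t" "t < 1"
  shows "ff xi t \<le> 1 - s"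
proof -
  have d: "1 - t^2 > 0" using t2lt[OF t] by simp
  have "0 \<le> ((1+s)*t - (1-xi))^2 / ((1+s)*(1-t^2))" using s d by simp
  then show ?thesis using ff_alt[OF assms] by simp
qed

lemma ff_pf:
  fixes xi s :: real
  assumes s2: "s^2 = 2*xi - xi^2" and s: "0 < s" "s < 1" and x: "xi < 1" "xi < s"
  shows "ff xi ((1-s)/(1-xi)) = 1 - s"
proof -
  have "0 \<le> (1-s)/(1-xi)" "(1-s)/(1-xi) < 1" using s x by (auto simp: field_simps)
  moreover have "(1+s)*((1-s)/(1-xi)) - (1-xi) = 0"
  proof -
    have "(1+s)*(1-s) = (1-xi)^2" using s2 by algebra
    then show ?thesis using x by (simp add: field_simps power2_eq_square)
  qed
  ultimately show ?thesis using ff_alt[OF s2 s(1)] by simp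
qed

lemma ff_anti:
  fixes xi s a b :: real
  assumes s2: "s^2 = 2*xi - xi^2" and s: "0 < s" "s < 1" and x: "xi < 1"
    and ab: "(1-s)/(1-xi) \<le> a" "a \<le> b" "b < 1"
  shows "ff xi b \<le> ff xi a"
proof -
  have "0 \<le> (1-s)/(1-xi)" using s x by simp
  then have a0: "0 \<le> a" using ab by linarith
  have k: "(1+s)*((1-s)/(1-xi)) = 1 - xi"
  proof -
    have "(1+s)*(1-s) = (1-xi)^2" using s2 by algebra
    then show ?thesis using x by (simp add: field_simps power2_eq_square)
  qed
  have "(1+s)*((1-s)/(1-xi)) \<le> (1+s)*a" using ab s by (intro mult_left_mono) auto
  then have g0: "0 \<le> (1+s)*a - (1-xi)" using k by simp
  have g1: "(1+s)*a - (1-xi) \<le> (1+s)*b - (1-xi)" using ab s by (simp add: mult_left_mono)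
  have sq: "((1+s)*a - (1-xi))^2 \<le> ((1+s)*b - (1-xi))^2" by (rule power_mono[OF g1 g0])
  have da: "0 < (1+s)*(1-b^2)" using ab a0 s t2lt[of b] by simp
  have db: "(1+s)*(1-b^2) \<le> (1+s)*(1-a^2)" using ab a0 s
    by (intro mult_left_mono) (auto simp: power2_eq_square intro: mult_mono)
  have "((1+s)*a - (1-xi))^2 / ((1+s)*(1-a^2)) \<le> ((1+s)*b - (1-xi))^2 / ((1+s)*(1-b^2))"
    by (rule frac_le[OF _ sq da db]) simp
  moreover have "ff xi a = (1 - s) - ((1+s)*a - (1-xi))^2 / ((1+s)*(1-a^2))"
    using ab by (intro ff_alt[OF s2 s(1) a0]) simp
  moreover have "ff xi b = (1 - s) - ((1+s)*b - (1-xi))^2 / ((1+s)*(1-b^2))"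
    using ab a0 by (intro ff_alt[OF s2 s(1)]) simp_all
  ultimately show ?thesis by linarith
qed

lemma A_mono:
  fixes xi p q r :: real
  assumes r: "r^2 = xi" "0 < r" and p: "0 \<le> p" "p \<le> q" "q \<le> 1 - r"
  shows "p * (1 - xi / (1 - p)) \<le> q * (1 - xi / (1 - q))"
proof -
  define Q where "Q = 1 - p"
  define Q' where "Q' = 1 - q"
  have QQ: "Q' \<le> Q" "r \<le> Q'" using p unfolding Q_def Q'_def by auto
  have pos: "0 < Q'" "0 < Q" using QQ r by auto
  have "r * r \<le> Q * Q'" using QQ r by (intro mult_mono) auto
  then have k: "0 \<le> Q * Q' - xi" using r by (simp add: power2_eq_square)
  have "q * (1 - xi / (1 - q)) - p * (1 - xi / (1 - p)) = (Q - Q') * (Q * Q' - xi) / (Q * Q')"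
    unfolding Q_def[symmetric] Q'_def[symmetric] using pos
    unfolding Q_def Q'_def by (simp add: field_simps)
  moreover have "0 \<le> (Q - Q') * (Q * Q' - xi) / (Q * Q')" using QQ k pos by simp
  ultimately show ?thesis by linarith
qed

lemma A_le:
  fixes xi p r :: real
  assumes r: "r^2 = xi" "0 < r" and p: "0 \<le> p" "p < 1"
  shows "p * (1 - xi / (1 - p)) \<le> (1 - r)^2"
proof -
  define Q where "Q = 1 - p"
  have pos: "0 < Q" using p unfolding Q_def by auto
  have "(1 - r)^2 - p * (1 - xi / (1 - p)) = (Q - r)^2 / Q"
    using pos r unfolding Q_def by (simp add: field_simps) (simp add: algebra_simps power2_eq_square)
  moreover have "0 \<le> (Q - r)^2 / Q" using pos by simp
  ultimately show ?thesis by linarith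
qed

lemma half_cancel: "(c::real) \<noteq> 0 \<Longrightarrow> c / 2 * (Y / c) = Y / 2"
  by (simp add: field_simps)

lemma A_ff:
  fixes xi q :: real
  assumes "0 \<le> q" "q < 1"
  shows "((1 + q) / 2) * ff xi q = q * (1 - xi / (1 - q))"
proof -
  have h: "1 - q^2 = (1 - q) * (1 + q)" by (simp add: algebra_simps power2_eq_square)
  have n: "1 - q \<noteq> 0" "1 + q \<noteq> 0" using assms by auto
  have "ff xi q = (2*q*(1-q-xi)/(1-q)) / (1+q)" unfolding ff_def h by (simp add: divide_divide_eq_left)
  then have "((1 + q) / 2) * ff xi q = (2*q*(1-q-xi)/(1-q)) / 2" by (simp only: half_cancel[OF n(2)])
  also have "\<dots> = q * (1 - xi / (1 - q))" using n by (simp add: field_simps)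
  finally show ?thesis .
qed

lemma pf_le:
  fixes xi r s :: real
  assumes r: "r^2 = xi" "0 < r" "r < 1" and s2: "s^2 = 2*xi - xi^2" "0 \<le> s" and x: "xi < 1"
  shows "(1 - s) / (1 - xi) \<le> 1 - r"
proof -
  define g where "g = r + r^2 - r^3"
  have g0: "0 \<le> g" unfolding g_def using r by (simp add: power2_eq_square power3_eq_cube)
      (metis add_increasing less_eq_real_def mult_le_one mult_left_le mult_nonneg_nonneg)
  have id0: "(r + r^2 - r^3)^2 - (2*r^2 - (r^2)^2) = r^2 * ((r - 1)^3 * (r + 1))"
    by algebra
  have id: "g^2 - (2*xi - xi^2) = r^2 * ((r - 1)^3 * (r + 1))"
    unfolding g_def r(1)[symmetric] by (rule id0)
  have "(r - 1)^3 \<le> 0" using r by (simp add: power_le_zero_eq)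
  then have "(r - 1)^3 * (r + 1) \<le> 0" using r by (simp add: mult_nonpos_nonneg)
  then have "r^2 * ((r - 1)^3 * (r + 1)) \<le> 0" by (simp add: mult_nonneg_nonpos)
  then have "g^2 \<le> s^2" using id s2 by simp
  then have gs: "g \<le> s" using s2(2) by (simp add: power2_le_iff_abs_le)
  have "(1 - r) * (1 - xi) = 1 - g" unfolding g_def using r(1)[symmetric]
    by (simp add: algebra_simps power2_eq_square power3_eq_cube)
  then have "1 - s \<le> (1 - r) * (1 - xi)" using gs by simp
  then show ?thesis using x by (simp add: divide_le_eq)
qed

lemma TC_alg:
  fixes xi p x :: real
  assumes p: "0 \<le> p" and x: "0 < x" "xi \<le> x" "x^2 = 2*xi*(p + x)" "p \<le> 1 - x"
  shows "p / (p + x) \<le> ff xi (1 - x)"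
proof -
  define q where "q = 1 - x"
  have "p * (x * (2*p + x)) = 2*p*(x - xi)*(p + x)" using x(3) by algebra
  then have h1: "p / (p + x) = 2*p*(x - xi) / (x * (2*p + x))"
    using p x by (simp add: frac_eq_eq)
  have "2*q/(2*q+x) - 2*p/(2*p+x) = 2*x*(q - p) / ((2*q+x)*(2*p+x))"
    using p x unfolding q_def by (simp add: field_simps)
  moreover have "0 \<le> 2*x*(q - p) / ((2*q+x)*(2*p+x))" using p x unfolding q_def by simp
  ultimately have "2*p/(2*p+x) \<le> 2*q/(2*q+x)" by linarith
  then have m: "(x - xi) / x * (2*p/(2*p+x)) \<le> (x - xi) / x * (2*q/(2*q+x))"
    using x by (intro mult_left_mono) auto
  have "p / (p + x) = 2*p*(x - xi) / (x * (2*p + x))" by (rule h1)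
  also have "\<dots> = (x - xi) / x * (2*p/(2*p+x))" by simp
  also have "\<dots> \<le> (x - xi) / x * (2*q/(2*q+x))" by (rule m)
  also have "\<dots> = ff xi (1 - x)"
  proof -
    have "1 - q^2 = x * (2*q + x)" unfolding q_def by (simp add: algebra_simps power2_eq_square)
    then show ?thesis unfolding ff_def q_def[symmetric] by (simp add: q_def)
  qed
  finally show ?thesis .
qed


lemma TB:
  assumes H: "H \<in> CDFs_mean mu" and p: "0 \<le> p" "p < 1" and x: "0 < xi" "p + xi \<le> 1"
    and k: "(1 - p)^2 \<le> 2 * xi"
  shows "worst_revenue0 xi p H \<le> mu * ff xi p"
proof -
  define b where "b = 2 * (1 - p - xi) / ((1 - p) * (1 + p))"
  have D: "0 < (1 - p) * (1 + p)" using p by auto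
  have b0: "0 \<le> b" unfolding b_def using x D by auto
  have "2 * (1 - p - xi) \<le> (1 - p) * (1 + p)"
    using k by (simp add: algebra_simps power2_eq_square)
  then have b1: "b \<le> 1" unfolding b_def using D by (simp add: divide_le_eq)
  have bb: "b * ((1 - p) * (1 + p)) = 2 * (1 - p - xi)" unfolding b_def using D p by simp
  have mean: "b * (1 - p)^2 / 2 + (1 - b * (p + (1 - p))) * (1 - p) = xi"
  proof -
    have "b * (1 - p)^2 / 2 + (1 - b * (p + (1 - p))) * (1 - p) = (1 - p) - b * ((1 - p) * (1 + p)) / 2"
      by (simp add: field_simps power2_eq_square)
    also have "\<dots> = xi" using bb by (simp add: field_simps)
    finally show ?thesis .
  qed
  have "worst_revenue0 xi p H \<le> p * b * mu"
    by (rule UBD[OF H p(1) _ _ b0 _ _ mean]) (use p b1 in auto)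
  also have "p * b * mu = mu * ff xi p"
  proof -
    have "1 - p^2 = (1 - p) * (1 + p)" by (simp add: algebra_simps power2_eq_square)
    then show ?thesis unfolding ff_def b_def by simp
  qed
  finally show ?thesis .
qed

lemma TC:
  assumes H: "H \<in> CDFs_mean mu" and mu: "0 \<le> mu" and p: "0 \<le> p" and x: "0 < xi" "p + xi \<le> 1"
    and k: "2 * xi \<le> (1 - p)^2"
  shows "\<exists>q. p \<le> q \<and> q < 1 \<and> worst_revenue0 xi p H \<le> mu * ff xi q"
proof -
  define sq where "sq = sqrt (xi^2 + 2 * xi * p)"
  have sq2: "sq^2 = xi^2 + 2 * xi * p" "0 \<le> sq" unfolding sq_def using x p by auto
  define y where "y = xi + sq"
  have y0: "0 < y" "xi \<le> y" unfolding y_def using x sq2 by auto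
  have y2: "y^2 = 2 * xi * (p + y)" unfolding y_def using sq2(1) by algebra
  have "xi^2 + 2 * xi * p \<le> (1 - p - xi)^2"
    using k by (simp add: algebra_simps power2_eq_square)
  then have "sq \<le> sqrt ((1 - p - xi)^2)" unfolding sq_def by (rule real_sqrt_le_mono)
  also have "\<dots> = 1 - p - xi" using x by simp
  finally have py: "p + y \<le> 1" unfolding y_def by simp
  have mean: "(1 / (p + y)) * y^2 / 2 + (1 - (1 / (p + y)) * (p + y)) * y = xi"
    using y2 y0 p by (simp add: field_simps)
  have "worst_revenue0 xi p H \<le> p * (1 / (p + y)) * mu"
    by (rule UBD[OF H p y0(1) py _ _ _ mean]) (use p y0 in auto)
  also have "\<dots> = mu * (p / (p + y))" by simp
  also have "\<dots> \<le> mu * ff xi (1 - y)"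
    by (rule mult_left_mono[OF TC_alg[OF p y0 y2] mu]) (use py in simp)
  finally show ?thesis using py y0 by (intro exI[of _ "1 - y"]) auto
qed


lemma UB1:
  assumes H: "H \<in> CDFs_mean mu" and mu: "0 \<le> mu" and p: "0 \<le> p" "p \<le> 1"
    and x: "0 < xi" "xi < 1" and s2: "s^2 = 2*xi - xi^2" "0 < s" "s < 1"
  shows "worst_revenue0 xi p H \<le> mu * (1 - s)"
proof (cases "1 \<le> p + xi")
  case True
  then have "worst_revenue0 xi p H \<le> 0" using UB0[OF H p(1)] x by auto
  also have "0 \<le> mu * (1 - s)" using mu s2 by auto
  finally show ?thesis .
next
  case False
  then have p1: "p < 1" "p + xi \<le> 1" using x by auto
  show ?thesis
  proof (cases "(1 - p)^2 \<le> 2 * xi")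
    case True
    have "worst_revenue0 xi p H \<le> mu * ff xi p" by (rule TB[OF H p(1) p1(1) x(1) p1(2) True])
    also have "\<dots> \<le> mu * (1 - s)" by (rule mult_left_mono[OF ff_le[OF s2(1,2) p(1) p1(1)] mu])
    finally show ?thesis .
  next
    case False
    then obtain q where q: "p \<le> q" "q < 1" "worst_revenue0 xi p H \<le> mu * ff xi q"
      using TC[OF H mu p(1) x(1) p1(2)] by auto
    have "mu * ff xi q \<le> mu * (1 - s)" using q p by (intro mult_left_mono[OF ff_le[OF s2(1,2)] mu]) auto
    then show ?thesis using q by linarith
  qed
qed

lemma ff_nonneg:
  fixes xi q :: real
  assumes "0 \<le> q" "q < 1" "q + xi \<le> 1"
  shows "0 \<le> ff xi q"
proof -
  have "0 < 1 - q^2" using t2lt[OF assms(1,2)] by simp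
  then show ?thesis unfolding ff_def using assms by simp
qed

lemma UB2:
  assumes H: "H \<in> CDFs_mean mu" and p: "0 \<le> p" "p \<le> 1"
    and x: "0 < xi" "xi < 1" and s2: "s^2 = 2*xi - xi^2" "0 < s" "s < 1"
    and r: "r^2 = xi" "0 < r" "r < 1"
    and pp: "(1 - s) / (1 - xi) \<le> pp" "pp \<le> 1 - r" and mu: "mu = (1 + pp) / 2"
  shows "worst_revenue0 xi p H \<le> mu * ff xi pp"
proof -
  have pf0: "0 \<le> (1 - s) / (1 - xi)" using s2 x by simp
  have pp0: "0 \<le> pp" "pp < 1" using pf0 pp r by linarith+
  have mu0: "0 \<le> mu" unfolding mu using pp0 by simp
  have rx: "xi \<le> r"
  proof -
    have h: "r * r \<le> r * 1" using r by (intro mult_left_mono) auto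
    have "r * r = xi" using r(1) by (simp add: power2_eq_square)
    then show ?thesis using h by linarith
  qed
  have Aeq: "mu * ff xi pp = pp * (1 - xi / (1 - pp))" unfolding mu by (rule A_ff[OF pp0])
  show ?thesis
  proof (cases "1 \<le> p + xi")
    case True
    then have "worst_revenue0 xi p H \<le> 0" using UB0[OF H p(1)] x by auto
    also have "0 \<le> mu * ff xi pp" using mu0 ff_nonneg[OF pp0] pp rx by simp
    finally show ?thesis .
  next
    case False
    then have p1: "p < 1" "p + xi \<le> 1" using x by auto
    show ?thesis
    proof (cases "p \<le> pp")
      case True
      have "worst_revenue0 xi p H \<le> p * (1 - xi / (1 - p))" by (rule UBA[OF H p(1) p1(1)]) (use x p1 in auto)
      also have "\<dots> \<le> pp * (1 - xi / (1 - pp))" by (rule A_mono[OF r(1,2) p(1) True pp(2)])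
      finally show ?thesis using Aeq by simp
    next
      case False
      show ?thesis
      proof (cases "(1 - p)^2 \<le> 2 * xi")
        case True
        have "worst_revenue0 xi p H \<le> mu * ff xi p" by (rule TB[OF H p(1) p1(1) x(1) p1(2) True])
        also have "\<dots> \<le> mu * ff xi pp"
          by (rule mult_left_mono[OF ff_anti[OF s2 x(2) pp(1)] mu0]) (use False p1 in auto)
        finally show ?thesis .
      next
        case False2: False
        then obtain q where q: "p \<le> q" "q < 1" "worst_revenue0 xi p H \<le> mu * ff xi q"
          using TC[OF H mu0 p(1) x(1) p1(2)] by auto
        have "mu * ff xi q \<le> mu * ff xi pp"
          by (rule mult_left_mono[OF ff_anti[OF s2 x(2) pp(1)] mu0]) (use False q in auto)
        then show ?thesis using q by linarith
      qed
    qed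
  qed
qed

lemma UB3:
  assumes H: "H \<in> CDFs_mean mu" and p: "0 \<le> p" "p \<le> 1"
    and x: "0 < xi" "xi < 1" and r: "r^2 = xi" "0 < r"
  shows "worst_revenue0 xi p H \<le> (1 - r)^2"
proof (cases "1 \<le> p + xi")
  case True
  then have "worst_revenue0 xi p H \<le> 0" using UB0[OF H p(1)] x by auto
  moreover have "0 \<le> (1 - r)^2" by simp
  ultimately show ?thesis by linarith
next
  case False
  then have p1: "p < 1" "p + xi \<le> 1" using x by auto
  have "worst_revenue0 xi p H \<le> p * (1 - xi / (1 - p))" by (rule UBA[OF H p(1) p1(1)]) (use x p1 in auto)
  also have "\<dots> \<le> (1 - r)^2" by (rule A_le[OF r p(1) p1(1)])
  finally show ?thesis .
qed

lemma LB_gen: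
  assumes c: "cdf01 H" and p: "0 \<le> p" and x: "0 \<le> xi" "xi \<le> 1"
    and pw: "\<And>v. 0 \<le> v \<Longrightarrow> v \<le> 1 \<Longrightarrow> al - be * v \<le> 1 - H (p + v)"
  shows "p * (al - be * xi) \<le> worst_revenue0 xi p H"
  unfolding worst_revenue0_def
proof (rule cINF_greatest)
  show "CDFs_mean xi \<noteq> {}" using point_in[OF x] by auto
  fix G assume G: "G \<in> CDFs_mean xi"
  have cG: "cdf01 G" and Gm: "(\<integral>x. x \<partial>interval_measure G) = xi" using G unfolding CDFs_mean_def by auto
  interpret real_distribution "interval_measure G" by (rule cdf01_rd[OF cG])
  have "al - be * xi = (\<integral>v. al - be * v \<partial>interval_measure G)"
    using cdf01_int_id[OF cG] Gm prob_space by simp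
  also have "\<dots> \<le> (\<integral>v. 1 - H (p + v) \<partial>interval_measure G)"
  proof (rule integral_mono_AE)
    show "integrable (interval_measure G) (\<lambda>v. al - be * v)"
      using cdf01_int_id[OF cG] by auto
    show "integrable (interval_measure G) (\<lambda>v. 1 - H (p + v))"
    proof (rule integrable_const_bound[of _ 1])
      show "AE v in interval_measure G. norm (1 - H (p + v)) \<le> 1"
        using cdf01_le1[OF c] cdf01_ge0[OF c] by auto
      show "(\<lambda>v. 1 - H (p + v)) \<in> borel_measurable (interval_measure G)"
        using cdf01_meas_shift[OF c] by simp
    qed
    show "AE v in interval_measure G. al - be * v \<le> 1 - H (p + v)"
      using cdf01_AE[OF cG] by (rule AE_mp) (intro AE_I2 impI pw; blast)
  qed
  finally show "p * (al - be * xi) \<le> revenue0 p H G"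
    unfolding revenue0_def by (rule mult_left_mono[OF _ p])
qed


lemma id1:
  fixes A B m u wp :: real
  assumes "A \<noteq> 0" "B \<noteq> 0" "wp = B - u"
  shows "1 - m/(B*A)*u = 1 - m/A + (1 - (1 - m/A)) * wp / B"
  using assms(1,2) unfolding assms(3) by (simp add: field_simps)

lemma id2:
  fixes D p mu xi :: real
  shows "p * (2*mu/D*(1-p) - 2*mu/D*xi) = mu * (2*p*(1-p-xi)/D)"
  by (simp add: algebra_simps diff_divide_distrib[symmetric] times_divide_eq_right)

definition HUf :: "real \<Rightarrow> real \<Rightarrow> real \<Rightarrow> real" where
  "HUf mu p w = (if w < 0 then 0 else if w < p then 1 - 2*mu/(1+p)
     else if w \<le> 1 then 1 - 2*mu/(1-p^2)*(1-w) else 1)"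

lemma HUf_Fq:
  assumes "0 \<le> p" "p < 1"
  shows "HUf mu p = Fq (1 - 2*mu/(1+p)) p"
proof
  fix w
  have D: "1 - p^2 = (1 - p) * (1 + p)" by (simp add: algebra_simps power2_eq_square)
  have n: "1 - p \<noteq> 0" "1 + p \<noteq> 0" using assms by auto
  show "HUf mu p w = Fq (1 - 2*mu/(1+p)) p w"
  proof (cases "p \<le> w \<and> w < 1")
    case True
    have "p * p < 1" using t2lt[OF assms] by (simp add: power2_eq_square)
    then have n2: "1 - p * p \<noteq> 0" "(1 - p) * (1 + p) \<noteq> 0" using n by (auto simp: algebra_simps)
    have "1 - 2*mu/((1 - p) * (1 + p))*(1-w) = 1 - 2*mu/(1+p) + (1 - (1 - 2*mu/(1+p))) * (w - p) / (1 - p)"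
      by (rule id1) (use n in auto)
    then have "1 - 2*mu/(1-p^2)*(1-w) = 1 - 2*mu/(1+p) + (1 - (1 - 2*mu/(1+p))) * (w - p) / (1 - p)"
      unfolding D .
    then show ?thesis using True assms unfolding HUf_def Fq_def by auto
  next
    case False
    then show ?thesis using assms unfolding HUf_def Fq_def by auto
  qed
qed

lemma HUf_in:
  assumes "0 \<le> p" "p < 1" "0 < mu" "2 * mu \<le> 1 + p"
  shows "HUf mu p \<in> CDFs_mean mu"
  unfolding HUf_Fq[OF assms(1,2)]
  by (rule Fq_in) (use assms in \<open>auto simp: field_simps\<close>)

lemma LB_AB:
  assumes p: "0 < p" "p < 1" and mu: "0 < mu" "2 * mu \<le> 1 + p" and x: "0 \<le> xi" "xi \<le> 1"
  shows "mu * ff xi p \<le> worst_revenue0 xi p (HUf mu p)"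
proof -
  define d where "d = 2*mu/(1-p^2)"
  have D: "0 < 1 - p^2" using t2lt[of p] p by simp
  have d0: "0 < d" unfolding d_def using D mu by simp
  have c: "cdf01 (HUf mu p)" using HUf_in[of p mu] p mu unfolding CDFs_mean_def by auto
  have "p * (d * (1 - p) - d * xi) \<le> worst_revenue0 xi p (HUf mu p)"
  proof (rule LB_gen[OF c _ x])
    show "0 \<le> p" using p by simp
    fix v :: real assume v: "0 \<le> v" "v \<le> 1"
    show "d * (1 - p) - d * v \<le> 1 - HUf mu p (p + v)"
    proof (cases "p + v \<le> 1")
      case True
      then have "HUf mu p (p + v) = 1 - d * (1 - (p + v))" unfolding HUf_def d_def using p v by auto
      then show ?thesis by (simp add: algebra_simps)
    next
      case False
      then have "HUf mu p (p + v) = 1" unfolding HUf_def using p v by auto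
      moreover have "d * (1 - p) - d * v \<le> 0"
      proof -
        have "d * (1 - p - v) \<le> 0" using False d0 by (intro mult_nonneg_nonpos) auto
        then show ?thesis by (simp add: algebra_simps)
      qed
      ultimately show ?thesis by simp
    qed
  qed
  moreover have "p * (d * (1 - p) - d * xi) = mu * ff xi p"
    unfolding d_def ff_def by (rule id2)
  ultimately show ?thesis by simp
qed

lemma LB_C:
  assumes r: "r^2 = xi" "0 < r" "r < 1" and pp: "1 - r < pp" "pp < 1" and x: "0 \<le> xi" "xi \<le> 1"
  shows "(1 - r)^2 \<le> worst_revenue0 xi (1 - r) (Fq 0 pp)"
proof -
  have c: "cdf01 (Fq 0 pp)" using Fq_in[of 0 pp "(1 + pp) / 2"] pp r unfolding CDFs_mean_def by auto
  have "(1 - r) * (1 - (1 / r) * xi) \<le> worst_revenue0 xi (1 - r) (Fq 0 pp)"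
  proof (rule LB_gen[OF c _ x])
    show "0 \<le> 1 - r" using r by simp
    fix v :: real assume v: "0 \<le> v" "v \<le> 1"
    show "1 - 1 / r * v \<le> 1 - Fq 0 pp (1 - r + v)"
    proof -
      consider "1 - r + v < pp" | "pp \<le> 1 - r + v" "1 - r + v < 1" | "1 \<le> 1 - r + v" by linarith
      then show ?thesis
      proof cases
        case 1
        then have "Fq 0 pp (1 - r + v) = 0" unfolding Fq_def by auto
        moreover have "0 \<le> 1 / r * v" using v r by simp
        ultimately show ?thesis by linarith
      next
        case 2
        then have F: "Fq 0 pp (1 - r + v) = (1 - r + v - pp) / (1 - pp)" using r v unfolding Fq_def by auto
        have "1 - (1 - r + v - pp) / (1 - pp) = (r - v) / (1 - pp)" using pp by (simp add: field_simps)
        moreover have "(r - v) / r \<le> (r - v) / (1 - pp)" using 2 pp r by (intro divide_left_mono) auto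
        moreover have "1 - 1 / r * v = (r - v) / r" using r by (simp add: field_simps)
        ultimately show ?thesis using F by simp
      next
        case 3
        then have "Fq 0 pp (1 - r + v) = 1" unfolding Fq_def using r v pp by auto
        moreover have "1 - 1 / r * v \<le> 0" using 3 r by (simp add: field_simps)
        ultimately show ?thesis by simp
      qed
    qed
  qed
  moreover have "(1 - r) * (1 - (1 / r) * xi) = (1 - r)^2"
    using r by (simp add: field_simps power2_eq_square)
  ultimately show ?thesis by simp
qed


lemma robust_intro:
  assumes "P \<in> {0..1}" "H \<in> CDFs_mean mu" "R \<le> worst_revenue0 xi P H"
    "\<And>p' H'. p' \<in> {0..1} \<Longrightarrow> H' \<in> CDFs_mean mu \<Longrightarrow> worst_revenue0 xi p' H' \<le> R"
  shows "robustly_optimal0 mu xi P H"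
  unfolding robustly_optimal0_def using assms by (meson order_trans)

theorem proposition2:
  fixes mu xi :: real
  assumes "0 < mu" "mu < 1" "0 < xi" "xi < 1"
  shows "robustly_optimal0 mu xi (p0_star mu xi) (HU0 mu xi)"
proof -
  define s where "s = sqrt (2*xi - xi^2)"
  have sf: "s^2 = 2*xi - xi^2" "0 < s" "s < 1" "xi < s"
    using s_facts[OF assms(3,4)] unfolding s_def by auto
  define r where "r = sqrt xi"
  have rf: "r^2 = xi" "0 < r" "r < 1"
    using assms real_sqrt_less_mono[of xi 1] unfolding r_def by auto
  define pf where "pf = (1 - s) / (1 - xi)"
  have pf: "0 < pf" "pf < 1" "pf \<le> 1 - r"
    using sf assms pf_le[OF rf sf(1) _ assms(4)] unfolding pf_def by (auto simp: field_simps)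
  have mlow: "2 * mu_low xi = 1 + pf"
    unfolding mu_low_def pf_def s_def[symmetric] using assms by (simp add: field_simps)
  have mhigh: "2 * mu_high xi = 2 - r"
    unfolding mu_high_def r_def by simp
  have x01: "0 \<le> xi" "xi \<le> 1" using assms by auto
  consider "mu \<le> mu_low xi" | "\<not> mu \<le> mu_low xi" "mu \<le> mu_high xi" | "\<not> mu \<le> mu_high xi" by linarith
  then show ?thesis
  proof cases
    case 1
    have P: "p0_star mu xi = pf" using 1 unfolding p0_star_def pf_def s_def by simp
    have nh: "\<not> mu > mu_high xi" using 1 mlow mhigh pf by linarith
    have HU: "HU0 mu xi = HUf mu pf"
      using nh P unfolding HU0_def HUf_def Let_def by (auto simp: fun_eq_iff)
    have m2: "2 * mu \<le> 1 + pf" using 1 mlow by simp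
    show ?thesis unfolding P HU
    proof (rule robust_intro)
      show "pf \<in> {0..1}" using pf by simp
      show "HUf mu pf \<in> CDFs_mean mu" using HUf_in[of pf mu] pf m2 assms by simp
      have "mu * ff xi pf \<le> worst_revenue0 xi pf (HUf mu pf)"
        using LB_AB[OF pf(1,2) assms(1) m2 x01] .
      then show "mu * (1 - s) \<le> worst_revenue0 xi pf (HUf mu pf)"
        using ff_pf[OF sf(1,2,3) assms(4) sf(4)] unfolding pf_def by simp
      fix p' :: real and H' :: "real \<Rightarrow> real" assume "p' \<in> {0..1}" "H' \<in> CDFs_mean mu"
      then show "worst_revenue0 xi p' H' \<le> mu * (1 - s)"
        using UB1[of H' mu p' xi s] assms sf by auto
    qed
  next
    case 2
    define pp where "pp = 2 * mu - 1"
    have P: "p0_star mu xi = pp" using 2 unfolding p0_star_def pp_def by simp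
    have nh: "\<not> mu > mu_high xi" using 2 by linarith
    have HU: "HU0 mu xi = HUf mu pp"
      using nh P unfolding HU0_def HUf_def Let_def by (auto simp: fun_eq_iff)
    have ppf: "pf < pp" "pp \<le> 1 - r" using 2 mlow mhigh unfolding pp_def by linarith+
    have pp01: "0 < pp" "pp < 1" using ppf pf rf by linarith+
    have m2: "2 * mu \<le> 1 + pp" unfolding pp_def by simp
    have mu_eq: "mu = (1 + pp) / 2" unfolding pp_def by simp
    show ?thesis unfolding P HU
    proof (rule robust_intro)
      show "pp \<in> {0..1}" using pp01 by simp
      show "HUf mu pp \<in> CDFs_mean mu" using HUf_in[of pp mu] pp01 m2 assms by simp
      show "mu * ff xi pp \<le> worst_revenue0 xi pp (HUf mu pp)"
        using LB_AB[OF pp01 assms(1) m2 x01] .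
      fix p' :: real and H' :: "real \<Rightarrow> real" assume p': "p' \<in> {0..1}" and H': "H' \<in> CDFs_mean mu"
      have p'': "0 \<le> p'" "p' \<le> 1" using p' by auto
      have pfpp: "(1 - s) / (1 - xi) \<le> pp" using ppf(1) unfolding pf_def by simp
      show "worst_revenue0 xi p' H' \<le> mu * ff xi pp"
        by (rule UB2[OF H' p'' assms(3,4) sf(1,2,3) rf pfpp ppf(2) mu_eq])
    qed
  next
    case 3
    define pp where "pp = 2 * mu - 1"
    have P: "p0_star mu xi = 1 - r" using 3 mlow mhigh pf unfolding p0_star_def r_def by auto
    have ppr: "1 - r < pp" "pp < 1" using 3 mhigh assms unfolding pp_def by linarith+
    have HU: "HU0 mu xi = Fq 0 pp"
      using 3 ppr rf unfolding HU0_def Fq_def pp_def by (auto simp: fun_eq_iff)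
    show ?thesis unfolding P HU
    proof (rule robust_intro)
      show "1 - r \<in> {0..1}" using rf by simp
      show "Fq 0 pp \<in> CDFs_mean mu" by (rule Fq_in) (use ppr rf in \<open>auto simp: pp_def\<close>)
      show "(1 - r)^2 \<le> worst_revenue0 xi (1 - r) (Fq 0 pp)"
        by (rule LB_C[OF rf ppr x01])
      fix p' :: real and H' :: "real \<Rightarrow> real" assume "p' \<in> {0..1}" "H' \<in> CDFs_mean mu"
      then show "worst_revenue0 xi p' H' \<le> (1 - r)^2"
        using UB3[of H' mu p' xi r] assms rf by auto
    qed
  qed
qed

end
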